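(* Let $X$, $\mathcal{B}$, $\Delta$, $\mathcal{D}(\mathcal{B})$ and $\mu\mapsto\hat\mu$ be as in the context (in particular $\mathcal{B}$ vanishes nowhere on $X$). Let $\mu\in\mathcal{D}(\mathcal{B})$. Then for every $f\in\mathcal{B}$, \[\|f\|_{L_2(X,\mu)}=\|\hat f\|_{L_2(\Delta,\hat\mu)}.\]
   Context: $X$ is a nonempty set and $\mathcal{B}$ is a real vector space of bounded functions $X\to\mathbb{R}$ closed under pointwise multiplication, pointwise max and min, with $f\wedge1\in\mathcal{B}$ for $f\in\mathcal{B}$. Assume that for every $x\in X$ there is $f\in\mathcal{B}$ with $f(x)\neq0$. $A(\mathcal{B})$ is the supremum-norm closure of $\mathcal{B}+i\mathcal{B}$, a commutative $C^\ast$-algebra; $\Delta$ is its spectrum (nonzero continuous multiplicative linear functionals with the Gelfand topology), locally compact Hausdorff; $\hat a(\varphi)=\varphi(a)$ is the Gelfand transform, an isometric $^\ast$-isomorphism $A(\mathcal{B})\to C_0(\Delta)$; $\hat f\geq0$ iff $f$ is real-valued and $\geq0$. $\sigma(\mathcal{B})$ is the $\sigma$-ring generated by $\mathcal{B}$, and $\mathcal{D}(\mathcal{B})$ is the set of nonnegative measures $\mu$ on $\sigma(\mathcal{B})$ such that every $f\in\mathcal{B}$ is $\mu$-integrable. For $\mu\in\mathcal{D}(\mathcal{B})$: set $I(f)=\int_Xf\,d\mu$ for $f\in\mathcal{B}$; for nonnegative real-valued $f\in A(\mathcal{B})$ set $I(f)=\sup_nI(f_n)$ for any increasing sequence $(f_n)$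 of nonnegative functions in $\mathcal{B}$ converging pointwise to $f$; set $\hat I(\hat f):=I(f)$ for nonnegative $\hat f\in C_0(\Delta)$; $\hat\mu$ is the unique nonnegative Radon measure on $\Delta$ with $\int_\Delta\hat g\,d\hat\mu=\hat I(\hat g)$ for all nonnegative $\hat g\in C_c(\Delta)$. *)

theory Defs
  imports "HOL-Analysis.Analysis"
begin

text \<open>Standing assumptions on the function space B of bounded real functions on the set X
  (represented by the type 'a).\<close>
definition admissible_space :: "('a \<Rightarrow> real) set \<Rightarrow> bool" where
  "admissible_space B \<longleftrightarrow>
     (\<lambda>x. 0) \<in> B \<and>
     (\<forall>f\<in>B. \<forall>g\<in>B. (\<lambda>x. f x + g x) \<in> B) \<and>
     (\<forall>f\<in>B. \<forall>c::real. (\<lambda>x. c * f x) \<in> B) \<and>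
     (\<forall>f\<in>B. \<forall>g\<in>B. (\<lambda>x. f x * g x) \<in> B) \<and>
     (\<forall>f\<in>B. \<forall>g\<in>B. (\<lambda>x. max (f x) (g x)) \<in> B) \<and>
     (\<forall>f\<in>B. \<forall>g\<in>B. (\<lambda>x. min (f x) (g x)) \<in> B) \<and>
     (\<forall>f\<in>B. (\<lambda>x. min (f x) 1) \<in> B) \<and>
     (\<forall>f\<in>B. \<exists>C. \<forall>x. \<bar>f x\<bar> \<le> C) \<and>
     (\<forall>x. \<exists>f\<in>B. f x \<noteq> 0)"

text \<open>A(B): supremum-norm closure of B + iB.\<close>
definition algA :: "('a \<Rightarrow> real) set \<Rightarrow> ('a \<Rightarrow> complex) set" where
  "algA B = {a. \<forall>e>0. \<exists>f\<in>B. \<exists>g\<in>B.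
      (\<exists>r<e. \<forall>x. cmod (a x - (complex_of_real (f x) + \<i> * complex_of_real (g x))) \<le> r)}"

text \<open>The spectrum Delta: nonzero continuous multiplicative linear functionals on A(B).
  Functionals are normalised to be 0 outside A(B), so that each character is a unique
  HOL function.\<close>
definition spectrum_chars :: "('a \<Rightarrow> real) set \<Rightarrow> (('a \<Rightarrow> complex) \<Rightarrow> complex) set" where
  "spectrum_chars B = {\<phi>.
     (\<forall>a. a \<notin> algA B \<longrightarrow> \<phi> a = 0) \<and>
     (\<forall>a\<in>algA B. \<forall>b\<in>algA B. \<phi> (\<lambda>x. a x + b x) = \<phi> a + \<phi> b) \<and>
     (\<forall>a\<in>algA B. \<forall>c::complex. \<phi> (\<lambda>x. c * a x) = c * \<phi> a) \<and>
     (\<forall>a\<in>algA B. \<forall>b\<in>algA B. \<phi> (\<lambda>x. a x * b x) = \<phi> a * \<phi> b) \<and>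
     (\<exists>a\<in>algA B. \<phi> a \<noteq> 0) \<and>
     (\<exists>C. \<forall>a\<in>algA B. cmod (\<phi> a) \<le> C * (SUP x. cmod (a x)))}"

text \<open>Gelfand topology: weak-* topology, i.e. the topology of pointwise convergence on A(B)
  (coordinates outside A(B) are constantly 0 on Delta).\<close>
definition gelfand_top :: "('a \<Rightarrow> real) set \<Rightarrow> (('a \<Rightarrow> complex) \<Rightarrow> complex) topology" where
  "gelfand_top B = subtopology (product_topology (\<lambda>_. euclidean) UNIV) (spectrum_chars B)"

definition gelfand :: "('a \<Rightarrow> complex) \<Rightarrow> (('a \<Rightarrow> complex) \<Rightarrow> complex) \<Rightarrow> complex" where
  "gelfand a = (\<lambda>\<phi>. \<phi> a)"

definition borel_sets_of :: "'b topology \<Rightarrow> 'b set set" where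
  "borel_sets_of T = sigma_sets (topspace T) {U. openin T U}"

definition radon_measure :: "'b topology \<Rightarrow> 'b measure \<Rightarrow> bool" where
  "radon_measure T N \<longleftrightarrow>
     space N = topspace T \<and> sets N = borel_sets_of T \<and>
     (\<forall>K. compactin T K \<longrightarrow> emeasure N K < \<infinity>) \<and>
     (\<forall>E\<in>sets N. emeasure N E = (INF U\<in>{U. openin T U \<and> E \<subseteq> U}. emeasure N U)) \<and>
     (\<forall>U. openin T U \<longrightarrow> emeasure N U = (SUP K\<in>{K. compactin T K \<and> K \<subseteq> U}. emeasure N K))"

definition sigmaB :: "('a \<Rightarrow> real) set \<Rightarrow> 'a set set" where
  "sigmaB B = sigma_sets UNIV {f -` U | f U. f \<in> B \<and> open U}"

definition DB :: "('a \<Rightarrow> real) set \<Rightarrow> 'a measure set" where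
  "DB B = {M. space M = UNIV \<and> sets M = sigmaB B \<and> (\<forall>f\<in>B. integrable M f)}"

definition is_hat_measure :: "('a \<Rightarrow> real) set \<Rightarrow> 'a measure \<Rightarrow> (('a \<Rightarrow> complex) \<Rightarrow> complex) measure \<Rightarrow> bool" where
  "is_hat_measure B M N \<longleftrightarrow>
     radon_measure (gelfand_top B) N \<and>
     (\<forall>g\<in>algA B.
        (\<forall>\<phi>\<in>spectrum_chars B. gelfand g \<phi> \<in> \<real> \<and> Re (gelfand g \<phi>) \<ge> 0) \<longrightarrow>
        compactin (gelfand_top B) (gelfand_top B closure_of {\<phi>\<in>spectrum_chars B. gelfand g \<phi> \<noteq> 0}) \<longrightarrow>
        (\<forall>fs::nat \<Rightarrow> 'a \<Rightarrow> real.
           (\<forall>n. fs n \<in> B) \<longrightarrow> (\<forall>n x. fs n x \<ge> 0) \<longrightarrow> (\<forall>n x. fs n x \<le> fs (Suc n) x) \<longrightarrow>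
           (\<forall>x. (\<lambda>n. complex_of_real (fs n x)) \<longlonglongrightarrow> g x) \<longrightarrow>
           (\<integral>\<^sup>+ \<phi>. ennreal (Re (gelfand g \<phi>)) \<partial>N) = (SUP n. ennreal (\<integral> x. fs n x \<partial>M))))"

end

theory Submission
  imports Defs
begin



definition cr :: "('a \<Rightarrow> real) \<Rightarrow> 'a \<Rightarrow> complex" where
  "cr h = (\<lambda>x. complex_of_real (h x))"

lemma adm_zero: "admissible_space B \<Longrightarrow> (\<lambda>x. 0) \<in> B"
  by (simp add: admissible_space_def)
lemma adm_add: "admissible_space B \<Longrightarrow> f \<in> B \<Longrightarrow> g \<in> B \<Longrightarrow> (\<lambda>x. f x + g x) \<in> B"
  by (simp add: admissible_space_def)
lemma adm_scale: "admissible_space B \<Longrightarrow> f \<in> B \<Longrightarrow> (\<lambda>x. c * f x) \<in> B"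
  by (simp add: admissible_space_def)
lemma adm_mult: "admissible_space B \<Longrightarrow> f \<in> B \<Longrightarrow> g \<in> B \<Longrightarrow> (\<lambda>x. f x * g x) \<in> B"
  by (simp add: admissible_space_def)
lemma adm_max: "admissible_space B \<Longrightarrow> f \<in> B \<Longrightarrow> g \<in> B \<Longrightarrow> (\<lambda>x. max (f x) (g x)) \<in> B"
  by (simp add: admissible_space_def)
lemma adm_min1: "admissible_space B \<Longrightarrow> f \<in> B \<Longrightarrow> (\<lambda>x. min (f x) 1) \<in> B"
  by (simp add: admissible_space_def)
lemma adm_bdd: "admissible_space B \<Longrightarrow> f \<in> B \<Longrightarrow> \<exists>C. \<forall>x. \<bar>f x\<bar> \<le> C"
  by (simp add: admissible_space_def)

lemma adm_diff: "admissible_space B \<Longrightarrow> f \<in> B \<Longrightarrow> g \<in> B \<Longrightarrow> (\<lambda>x. f x - g x) \<in> B"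
proof -
  assume a: "admissible_space B" "f \<in> B" "g \<in> B"
  have "(\<lambda>x. f x + (-1) * g x) \<in> B" using a adm_add adm_scale by blast
  thus ?thesis by simp
qed

lemma adm_minc: assumes "admissible_space B" "f \<in> B" "c > 0"
  shows "(\<lambda>x. min (f x) c) \<in> B"
proof -
  have "(\<lambda>x. (1/c) * f x) \<in> B" using assms adm_scale by blast
  hence "(\<lambda>x. min ((1/c) * f x) 1) \<in> B" using assms adm_min1 by blast
  hence "(\<lambda>x. c * min ((1/c) * f x) 1) \<in> B" using assms adm_scale by blast
  moreover have "(\<lambda>x. c * min ((1/c) * f x) 1) = (\<lambda>x. min (f x) c)"
  proof
    fix x show "c * min ((1/c) * f x) 1 = min (f x) c"
      using assms(3) by (simp add: min_def field_simps)
  qed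
  ultimately show ?thesis by simp
qed

lemma adm_pow: "admissible_space B \<Longrightarrow> f \<in> B \<Longrightarrow> (\<lambda>x. f x ^ Suc n) \<in> B"
proof (induction n)
  case 0 thus ?case by simp
next
  case (Suc n)
  have "(\<lambda>x. f x * f x ^ Suc n) \<in> B" using Suc adm_mult by blast
  thus ?case by simp
qed

lemma cr_in_algA: assumes "f \<in> B" "admissible_space B" shows "cr f \<in> algA B"
  unfolding algA_def cr_def
proof (intro CollectI allI impI)
  fix e :: real assume "e > 0"
  show "\<exists>fa\<in>B. \<exists>g\<in>B. \<exists>r<e. \<forall>x. cmod (complex_of_real (f x) - (complex_of_real (fa x) + \<i> * complex_of_real (g x))) \<le> r"
    using assms adm_zero[OF assms(2)] \<open>e>0\<close> by (intro bexI[of _ f] bexI[of _ "\<lambda>x. 0"] exI[of _ 0]) auto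
qed

lemma spec_add: "\<phi> \<in> spectrum_chars B \<Longrightarrow> a \<in> algA B \<Longrightarrow> b \<in> algA B \<Longrightarrow> \<phi> (\<lambda>x. a x + b x) = \<phi> a + \<phi> b"
  unfolding spectrum_chars_def by blast
lemma spec_scale: "\<phi> \<in> spectrum_chars B \<Longrightarrow> a \<in> algA B \<Longrightarrow> \<phi> (\<lambda>x. c * a x) = c * \<phi> a"
  unfolding spectrum_chars_def by blast
lemma spec_mult: "\<phi> \<in> spectrum_chars B \<Longrightarrow> a \<in> algA B \<Longrightarrow> b \<in> algA B \<Longrightarrow> \<phi> (\<lambda>x. a x * b x) = \<phi> a * \<phi> b"
  unfolding spectrum_chars_def by blast
lemma spec_out: "\<phi> \<in> spectrum_chars B \<Longrightarrow> a \<notin> algA B \<Longrightarrow> \<phi> a = 0"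
  unfolding spectrum_chars_def by blast

lemma chr_add: assumes "\<phi> \<in> spectrum_chars B" "admissible_space B" "f \<in> B" "g \<in> B"
  shows "\<phi> (cr (\<lambda>x. f x + g x)) = \<phi> (cr f) + \<phi> (cr g)"
proof -
  have "cr (\<lambda>x. f x + g x) = (\<lambda>x. cr f x + cr g x)" by (simp add: cr_def fun_eq_iff)
  thus ?thesis using spec_add[OF assms(1) cr_in_algA[OF assms(3,2)] cr_in_algA[OF assms(4,2)]] by simp
qed

lemma chr_scale: assumes "\<phi> \<in> spectrum_chars B" "admissible_space B" "f \<in> B"
  shows "\<phi> (cr (\<lambda>x. c * f x)) = of_real c * \<phi> (cr f)"
proof -
  have "cr (\<lambda>x. c * f x) = (\<lambda>x. of_real c * cr f x)" by (simp add: cr_def fun_eq_iff)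
  thus ?thesis using spec_scale[OF assms(1) cr_in_algA[OF assms(3,2)]] by simp
qed

lemma chr_mult: assumes "\<phi> \<in> spectrum_chars B" "admissible_space B" "f \<in> B" "g \<in> B"
  shows "\<phi> (cr (\<lambda>x. f x * g x)) = \<phi> (cr f) * \<phi> (cr g)"
proof -
  have "cr (\<lambda>x. f x * g x) = (\<lambda>x. cr f x * cr g x)" by (simp add: cr_def fun_eq_iff)
  thus ?thesis using spec_mult[OF assms(1) cr_in_algA[OF assms(3,2)] cr_in_algA[OF assms(4,2)]] by simp
qed

lemma chr_diff: assumes "\<phi> \<in> spectrum_chars B" "admissible_space B" "f \<in> B" "g \<in> B"
  shows "\<phi> (cr (\<lambda>x. f x - g x)) = \<phi> (cr f) - \<phi> (cr g)"
proof -
  have m: "(\<lambda>x. (-1) * g x) \<in> B" using assms adm_scale by blast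
  have "\<phi> (cr (\<lambda>x. f x - g x)) = \<phi> (cr (\<lambda>x. f x + (-1) * g x))" by simp
  also have "\<dots> = \<phi> (cr f) + \<phi> (cr (\<lambda>x. (-1) * g x))" using chr_add[OF assms(1,2,3) m] .
  also have "\<dots> = \<phi> (cr f) - \<phi> (cr g)" using chr_scale[OF assms(1,2,4), of "-1"] by simp
  finally show ?thesis .
qed

lemma chr_zero: assumes "\<phi> \<in> spectrum_chars B" "admissible_space B"
  shows "\<phi> (cr (\<lambda>x. 0)) = 0"
  using chr_scale[OF assms adm_zero[OF assms(2)], of 0] by simp

lemma chr_pow: assumes "\<phi> \<in> spectrum_chars B" "admissible_space B" "f \<in> B"
  shows "\<phi> (cr (\<lambda>x. f x ^ Suc n)) = \<phi> (cr f) ^ Suc n"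
proof (induction n)
  case 0 thus ?case by simp
next
  case (Suc n)
  have "\<phi> (cr (\<lambda>x. f x * f x ^ Suc n)) = \<phi> (cr f) * \<phi> (cr (\<lambda>x. f x ^ Suc n))"
    using chr_mult[OF assms adm_pow[OF assms(2,3)]] .
  thus ?case using Suc by simp
qed

lemma pow_bound_le: fixes z c D :: real
  assumes "z \<ge> 0" "c \<ge> 0" "\<And>n. z ^ Suc n \<le> D * c ^ Suc n"
  shows "z \<le> c"
proof (rule ccontr)
  assume "\<not> z \<le> c" hence zc: "z > c" by simp
  show False
  proof (cases "c = 0")
    case True thus ?thesis using assms(3)[of 0] zc by simp
  next
    case False
    hence cp: "c > 0" using assms by simp
    have "1 < z / c" using zc cp by simp
    then obtain n where n: "D < (z/c) ^ n" using real_arch_pow by blast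
    have "(z/c)^n \<le> (z/c) ^ Suc n" by (rule power_increasing) (use \<open>1 < z/c\<close> in auto)
    also have "\<dots> = z ^ Suc n / c ^ Suc n" by (simp only: power_divide)
    also have "\<dots> \<le> D" using assms(3)[of n] cp by (simp add: divide_le_eq)
    finally show False using n by simp
  qed
qed

lemma chr_bound: assumes "\<phi> \<in> spectrum_chars B" "admissible_space B" "f \<in> B"
  and c: "\<And>x. \<bar>f x\<bar> \<le> c"
  shows "cmod (\<phi> (cr f)) \<le> c"
proof -
  obtain C where C: "\<forall>a\<in>algA B. cmod (\<phi> a) \<le> C * (SUP x. cmod (a x))"
    using assms(1) unfolding spectrum_chars_def by blast
  have c0: "c \<ge> 0" using c[of undefined] by linarith
  show ?thesis
  proof (rule pow_bound_le[of _ _ "max C 0"])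
    show "cmod (\<phi> (cr f)) \<ge> 0" "c \<ge> 0" using c0 by auto
    fix n
    have inA: "cr (\<lambda>x. f x ^ Suc n) \<in> algA B" using cr_in_algA adm_pow assms by blast
    have sup: "(SUP x. cmod (cr (\<lambda>x. f x ^ Suc n) x)) \<le> c ^ Suc n"
      by (rule cSUP_least) (auto simp: cr_def norm_power simp del: power_Suc intro: power_mono c)
    have s0: "0 \<le> (SUP x. cmod (cr (\<lambda>x. f x ^ Suc n) x))"
    proof -
      have "bdd_above (range (\<lambda>x. cmod (cr (\<lambda>x. f x ^ Suc n) x)))"
        using sup by (intro bdd_aboveI[of _ "c ^ Suc n"]) (auto simp: cr_def norm_power simp del: power_Suc intro: power_mono c)
      hence "cmod (cr (\<lambda>x. f x ^ Suc n) undefined) \<le> (SUP x. cmod (cr (\<lambda>x. f x ^ Suc n) x))"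
        by (rule cSUP_upper[OF UNIV_I])
      thus ?thesis by (meson norm_ge_zero order_trans)
    qed
    have "cmod (\<phi> (cr f)) ^ Suc n = cmod (\<phi> (cr (\<lambda>x. f x ^ Suc n)))"
      using chr_pow[OF assms(1-3), of n] by (simp only: norm_power)
    also have "\<dots> \<le> C * (SUP x. cmod (cr (\<lambda>x. f x ^ Suc n) x))" using C inA by blast
    also have "\<dots> \<le> max C 0 * (SUP x. cmod (cr (\<lambda>x. f x ^ Suc n) x))"
      using s0 by (intro mult_right_mono) auto
    also have "\<dots> \<le> max C 0 * c ^ Suc n" using sup by (intro mult_left_mono) auto
    finally show "cmod (\<phi> (cr f)) ^ Suc n \<le> max C 0 * c ^ Suc n" .
  qed
qed




lemma eps_zero: fixes a :: real assumes "\<And>e. e > 0 \<Longrightarrow> a \<le> e" "a \<ge> 0" shows "a = 0"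
  using assms by (metis dense not_le order.antisym)

lemma chr_nonneg_real:
  assumes phi: "\<phi> \<in> spectrum_chars B" and adm: "admissible_space B" and hB: "h \<in> B"
    and hpos: "\<And>x. h x \<ge> 0"
  shows "\<exists>t\<ge>0. \<phi> (cr h) = of_real t"
proof -
  define z where "z = \<phi> (cr h)"
  define m where "m c = (\<lambda>x. min (h x) c)" for c :: real
  define r where "r c = (\<lambda>x. h x - min (h x) c)" for c :: real
  define \<rho> where "\<rho> c = \<phi> (cr (r c))" for c
  have mB: "c > 0 \<Longrightarrow> m c \<in> B" for c unfolding m_def using adm_minc adm hB by blast
  have rB: "c > 0 \<Longrightarrow> r c \<in> B" for c unfolding r_def using adm_diff[OF adm hB adm_minc[OF adm hB]] by blast
  have F1: "\<rho> c * \<phi> (cr (m c)) = of_real c * \<rho> c" if c: "c > 0" for c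
  proof -
    have "(\<lambda>x. r c x * m c x) = (\<lambda>x. c * r c x)"
      by (auto simp: r_def m_def fun_eq_iff min_def)
    hence "\<phi> (cr (\<lambda>x. r c x * m c x)) = \<phi> (cr (\<lambda>x. c * r c x))" by simp
    thus ?thesis using chr_mult[OF phi adm rB[OF c] mB[OF c]] chr_scale[OF phi adm rB[OF c]]
      unfolding \<rho>_def by simp
  qed
  have F2: "z = \<phi> (cr (m c)) + \<rho> c" if c: "c > 0" for c
  proof -
    have "h = (\<lambda>x. m c x + r c x)" by (auto simp: r_def m_def fun_eq_iff)
    hence "z = \<phi> (cr (\<lambda>x. m c x + r c x))" unfolding z_def by simp
    thus ?thesis using chr_add[OF phi adm mB[OF c] rB[OF c]] unfolding \<rho>_def by simp
  qed
  have F3: "cmod (\<phi> (cr (m c))) \<le> c" if c: "c > 0" for c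
    by (rule chr_bound[OF phi adm mB[OF c]]) (metis m_def hpos c abs_of_nonneg min.absorb_iff2 min.cobounded2 min_def nle_le order.strict_implies_order)
  have F4: "\<rho> c = z - of_real c" if c: "c > 0" and ne: "\<rho> c \<noteq> 0" for c
  proof -
    from F1[OF c] ne have "\<phi> (cr (m c)) = of_real c"
      by (metis mult.commute mult_cancel_left)
    thus ?thesis using F2[OF c] by simp
  qed
  have F5: "cmod z \<le> c" if c: "c > 0" and e: "\<rho> c = 0" for c
    using F2[OF c] F3[OF c] e by simp
  have F6: "cmod (\<rho> c - \<rho> d) \<le> \<bar>c - d\<bar>" if c: "c > 0" and d: "d > 0" for c d
  proof -
    have "\<rho> c - \<rho> d = \<phi> (cr (\<lambda>x. r c x - r d x))"
      unfolding \<rho>_def using chr_diff[OF phi adm rB[OF c] rB[OF d]] by simp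
    also have "cmod \<dots> \<le> \<bar>c - d\<bar>"
      by (rule chr_bound[OF phi adm adm_diff[OF adm rB[OF c] rB[OF d]]]) (auto simp: r_def min_def abs_if)
    finally show ?thesis .
  qed
  obtain R where R: "\<And>x. \<bar>h x\<bar> \<le> R" using adm_bdd[OF adm hB] by blast
  have F7: "\<rho> c = 0" if c: "c > 0" "c \<ge> R" for c
  proof -
    have "r c = (\<lambda>x. 0)" using R c by (auto simp: r_def fun_eq_iff min_def abs_if) (smt (verit) R)
    thus ?thesis unfolding \<rho>_def using chr_zero[OF phi adm] by simp
  qed
  show ?thesis
  proof (cases "\<forall>c>0. \<rho> c = 0")
    case True
    have "cmod z = 0" by (rule eps_zero) (use F5 True in auto)
    thus ?thesis unfolding z_def by (intro exI[of _ 0]) auto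
  next
    case False
    define S where "S = {c. c > 0 \<and> \<rho> c \<noteq> 0}"
    obtain c0 where c0: "c0 \<in> S" using False S_def by auto
    have Sne: "S \<noteq> {}" using c0 by auto
    have Sb: "c \<le> max R 1" if "c \<in> S" for c
      using F7 that unfolding S_def by force
    have bdd: "bdd_above S" using Sb by (intro bdd_aboveI) blast
    define s where "s = Sup S"
    have cs: "c \<le> s" if "c \<in> S" for c using cSup_upper[OF that bdd] s_def by simp
    have s0: "s > 0" using cs[OF c0] c0 S_def by auto
    have rs: "\<rho> s = 0"
    proof -
      have "cmod (\<rho> s) = 0"
      proof (rule eps_zero)
        fix e :: real assume e: "e > 0"
        have "s + e \<notin> S" using cs e by force
        hence "\<rho> (s + e) = 0" using s0 e S_def by auto
        hence "cmod (\<rho> s) = cmod (\<rho> s - \<rho> (s + e))" by simp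
        also have "\<dots> \<le> \<bar>s - (s + e)\<bar>" using F6[of s "s+e"] s0 e by simp
        finally show "cmod (\<rho> s) \<le> e" using e by simp
      qed simp
      thus ?thesis by simp
    qed
    have "cmod (z - of_real s) = 0"
    proof (rule eps_zero)
      fix e :: real assume e: "e > 0"
      have "s - e/2 < Sup S" using e s_def by simp
      then obtain c where c: "c \<in> S" "s - e/2 < c" using less_cSupE[OF _ Sne] by blast
      have cp: "c > 0" "\<rho> c \<noteq> 0" using c S_def by auto
      have "z - of_real s = (\<rho> c - \<rho> s) + (of_real c - of_real s)"
        using F4[OF cp] rs by simp
      hence "cmod (z - of_real s) \<le> cmod (\<rho> c - \<rho> s) + cmod (of_real c - of_real s :: complex)"
        by (metis norm_triangle_ineq)
      also have "\<dots> \<le> \<bar>c - s\<bar> + \<bar>c - s\<bar>" using F6[OF cp(1) s0]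
        by (metis add_right_mono norm_of_real of_real_diff)
      also have "\<dots> \<le> e" using c cs by auto
      finally show "cmod (z - of_real s) \<le> e" .
    qed simp
    thus ?thesis unfolding z_def using s0 by (intro exI[of _ s]) auto
  qed
qed




lemma chr_lattice:
  assumes phi: "\<phi> \<in> spectrum_chars B" and adm: "admissible_space B" and hB: "h \<in> B"
    and hpos: "\<And>x. h x \<ge> 0" and ht: "\<phi> (cr h) = of_real t" and c: "c > 0"
  shows "\<phi> (cr (\<lambda>x. h x - min (h x) c)) = of_real (max (t - c) 0)"
proof -
  define m where "m = (\<lambda>x. min (h x) c)"
  define r where "r = (\<lambda>x. h x - min (h x) c)"
  have mB: "m \<in> B" unfolding m_def using adm_minc adm hB c by blast
  have rB: "r \<in> B" unfolding r_def using adm_diff[OF adm hB adm_minc[OF adm hB c]] by blast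
  have F1: "\<phi> (cr r) * \<phi> (cr m) = of_real c * \<phi> (cr r)"
  proof -
    have "(\<lambda>x. r x * m x) = (\<lambda>x. c * r x)"
      by (auto simp: r_def m_def fun_eq_iff min_def)
    hence "\<phi> (cr (\<lambda>x. r x * m x)) = \<phi> (cr (\<lambda>x. c * r x))" by simp
    thus ?thesis using chr_mult[OF phi adm rB mB] chr_scale[OF phi adm rB] by simp
  qed
  have F2: "\<phi> (cr h) = \<phi> (cr m) + \<phi> (cr r)"
  proof -
    have "h = (\<lambda>x. m x + r x)" by (auto simp: r_def m_def fun_eq_iff)
    hence "\<phi> (cr h) = \<phi> (cr (\<lambda>x. m x + r x))" by simp
    thus ?thesis using chr_add[OF phi adm mB rB] by simp
  qed
  have F3: "cmod (\<phi> (cr m)) \<le> c"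
    by (rule chr_bound[OF phi adm mB]) (metis m_def hpos c abs_of_nonneg min.absorb_iff2 min.cobounded2 min_def nle_le order.strict_implies_order)
  obtain u where u: "u \<ge> 0" "\<phi> (cr r) = of_real u"
    using chr_nonneg_real[OF phi adm rB] unfolding r_def by force
  show ?thesis
  proof (cases "u = 0")
    case False
    have "of_real u * \<phi> (cr m) = of_real u * (of_real c :: complex)" using F1 u by (simp add: mult.commute)
    hence "\<phi> (cr m) = of_real c" using False by simp
    hence "of_real t = (of_real (c + u) :: complex)" using F2 ht u by simp
    hence "t = c + u" by (simp only: of_real_eq_iff)
    thus ?thesis using u False unfolding r_def[symmetric] by simp
  next
    case True
    hence "\<phi> (cr m) = of_real t" using F2 ht u by simp
    hence "\<bar>t\<bar> \<le> c" using F3 by simp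
    thus ?thesis using u True unfolding r_def[symmetric] by simp
  qed
qed

lemma sq_in_B: "admissible_space B \<Longrightarrow> f \<in> B \<Longrightarrow> (\<lambda>x. (f x)\<^sup>2) \<in> B"
  using adm_mult[of B f f] by (simp add: power2_eq_square)

lemma chr_sq:
  assumes phi: "\<phi> \<in> spectrum_chars B" and adm: "admissible_space B" and fB: "f \<in> B"
  shows "\<phi> (cr (\<lambda>x. (f x)\<^sup>2)) = of_real ((cmod (\<phi> (cr f)))\<^sup>2)"
proof -
  define w where "w = \<phi> (cr f)"
  have e: "\<phi> (cr (\<lambda>x. (f x)\<^sup>2)) = w * w"
    using chr_mult[OF phi adm fB fB] unfolding w_def by (simp add: power2_eq_square)
  obtain t where t: "t \<ge> 0" "\<phi> (cr (\<lambda>x. (f x)\<^sup>2)) = of_real t"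
    using chr_nonneg_real[OF phi adm sq_in_B[OF adm fB]] by auto
  have ww: "w * w = of_real t" using e t by simp
  hence im: "2 * Re w * Im w = 0" and re: "Re w * Re w - Im w * Im w = t"
    by (auto simp: complex_eq_iff)
  have "Im w = 0"
  proof (rule ccontr)
    assume "Im w \<noteq> 0"
    hence "Re w = 0" using im by simp
    have "Im w * Im w > 0" using \<open>Im w \<noteq> 0\<close> by (simp add: zero_less_mult_iff) linarith
    thus False using re t \<open>Re w = 0\<close> by simp
  qed
  hence "w = of_real (Re w)" by (simp add: complex_eq_iff)
  then obtain a where a: "w = of_real a" by blast
  have "w * w = of_real ((cmod w)\<^sup>2)"
    unfolding a by (simp add: power2_eq_square)
  thus ?thesis using e w_def by simp
qed




lemma cr_apply: "cr h x = complex_of_real (h x)" by (simp add: cr_def)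

lemma fg_in_algA: assumes "f \<in> B" "g \<in> B" shows "(\<lambda>x. cr f x + \<i> * cr g x) \<in> algA B"
  unfolding algA_def cr_apply
proof (intro CollectI allI impI)
  fix e :: real assume "e > 0"
  show "\<exists>fa\<in>B. \<exists>ga\<in>B. \<exists>r<e. \<forall>x. cmod (complex_of_real (f x) + \<i> * complex_of_real (g x) - (complex_of_real (fa x) + \<i> * complex_of_real (ga x))) \<le> r"
    using assms \<open>e>0\<close> by (intro bexI[of _ f] bexI[of _ g] exI[of _ 0]) auto
qed

definition nrm :: "('a \<Rightarrow> complex) \<Rightarrow> real" where "nrm a = (SUP x. cmod (a x))"

lemma le_eps_K: fixes x y K :: real assumes K: "K \<ge> 0" and h: "\<And>e. e > 0 \<Longrightarrow> x \<le> y + K * e"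
  shows "x \<le> y"
proof (rule ccontr)
  assume "\<not> x \<le> y"
  hence d: "x - y > 0" by simp
  define e where "e = (x - y) / (2 * (K + 1))"
  have e: "e > 0" using d K by (simp add: e_def)
  have "K * e < x - y"
  proof -
    have "K * e \<le> (K + 1) * e" using e by simp
    also have "\<dots> = (x - y) / 2" using K by (simp add: e_def field_simps)
    finally show ?thesis using d by simp
  qed
  thus False using h[OF e] by simp
qed

lemma algA_approx: assumes "a \<in> algA B" "e > 0"
  obtains f g r where "f \<in> B" "g \<in> B" "r < e" "\<And>x. cmod (a x - (of_real (f x) + \<i> * of_real (g x))) \<le> r"
  using assms unfolding algA_def by blast

lemma algA_bdd: assumes adm: "admissible_space B" and a: "a \<in> algA B"
  shows "\<exists>M. \<forall>x. cmod (a x) \<le> M"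
proof -
  obtain f g r where fg: "f \<in> B" "g \<in> B" "r < 1" "\<And>x. cmod (a x - (of_real (f x) + \<i> * of_real (g x))) \<le> r"
    using algA_approx[OF a, of 1] by auto
  obtain Cf Cg where C: "\<And>x. \<bar>f x\<bar> \<le> Cf" "\<And>x. \<bar>g x\<bar> \<le> Cg"
    using adm_bdd[OF adm fg(1)] adm_bdd[OF adm fg(2)] by blast
  have "cmod (a x) \<le> 1 + Cf + Cg" for x
  proof -
    have "cmod (a x) \<le> cmod (a x - (of_real (f x) + \<i> * of_real (g x))) + cmod (of_real (f x) + \<i> * of_real (g x))"
      by (metis add.commute diff_add_cancel norm_triangle_ineq)
    also have "\<dots> \<le> r + (\<bar>f x\<bar> + \<bar>g x\<bar>)"
    proof (intro add_mono fg(4))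
      have "cmod (of_real (f x) + \<i> * of_real (g x)) \<le> cmod (of_real (f x)) + cmod (\<i> * of_real (g x))"
        by (rule norm_triangle_ineq)
      thus "cmod (of_real (f x) + \<i> * of_real (g x)) \<le> \<bar>f x\<bar> + \<bar>g x\<bar>" by (simp add: norm_mult)
    qed
    finally show ?thesis using C[of x] fg(3) by simp
  qed
  thus ?thesis by blast
qed

lemma nrm_upper: assumes adm: "admissible_space B" and a: "a \<in> algA B"
  shows "cmod (a x) \<le> nrm a"
proof -
  obtain M where "\<forall>x. cmod (a x) \<le> M" using algA_bdd[OF adm a] by blast
  hence "bdd_above (range (\<lambda>x. cmod (a x)))" by (intro bdd_aboveI) auto
  thus ?thesis unfolding nrm_def by (rule cSUP_upper[OF UNIV_I])
qed

lemma i_cr_in_algA: assumes "g \<in> B" "admissible_space B" shows "(\<lambda>x. \<i> * cr g x) \<in> algA B"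
  unfolding algA_def cr_def
proof (intro CollectI allI impI)
  fix e :: real assume "e > 0"
  show "\<exists>f\<in>B. \<exists>ga\<in>B. \<exists>r<e. \<forall>x. cmod (\<i> * complex_of_real (g x) - (complex_of_real (f x) + \<i> * complex_of_real (ga x))) \<le> r"
    using assms adm_zero[OF assms(2)] \<open>e>0\<close> by (intro bexI[of _ "\<lambda>x. 0"] bexI[of _ g] exI[of _ 0]) auto
qed

lemma algA_sub: assumes adm: "admissible_space B" and a: "a \<in> algA B" and fB: "f \<in> B" and gB: "g \<in> B"
  shows "(\<lambda>x. a x - (cr f x + \<i> * cr g x)) \<in> algA B"
  unfolding algA_def
proof (intro CollectI allI impI)
  fix e :: real assume e: "e > 0"
  obtain f' g' r where fg: "f' \<in> B" "g' \<in> B" "r < e" "\<And>x. cmod (a x - (of_real (f' x) + \<i> * of_real (g' x))) \<le> r"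
    using algA_approx[OF a e] by blast
  have all: "\<forall>x. cmod (a x - (cr f x + \<i> * cr g x) - (complex_of_real (f' x - f x) + \<i> * complex_of_real (g' x - g x))) \<le> r"
  proof
    fix x
    have eq: "a x - (cr f x + \<i> * cr g x) - (complex_of_real (f' x - f x) + \<i> * complex_of_real (g' x - g x))
        = a x - (of_real (f' x) + \<i> * of_real (g' x))" by (simp add: cr_apply algebra_simps)
    show "cmod (a x - (cr f x + \<i> * cr g x) - (complex_of_real (f' x - f x) + \<i> * complex_of_real (g' x - g x))) \<le> r"
      by (subst eq) (rule fg(4))
  qed
  have B1: "(\<lambda>x. f' x - f x) \<in> B" "(\<lambda>x. g' x - g x) \<in> B" using fg adm_diff adm fB gB by auto
  show "\<exists>fa\<in>B. \<exists>ga\<in>B. \<exists>r<e. \<forall>x. cmod (a x - (cr f x + \<i> * cr g x) - (complex_of_real (fa x) + \<i> * complex_of_real (ga x))) \<le> r"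
    using all fg(3) by (intro bexI[OF _ B1(1)] bexI[OF _ B1(2)] exI[of _ r]) auto
qed

lemma chr_uniform: assumes phi: "\<phi> \<in> spectrum_chars B" and adm: "admissible_space B" and a: "a \<in> algA B"
  shows "cmod (\<phi> a) \<le> 2 * nrm a"
proof -
  obtain C where C: "\<forall>a\<in>algA B. cmod (\<phi> a) \<le> C * (SUP x. cmod (a x))"
    using phi unfolding spectrum_chars_def by blast
  show ?thesis
  proof (rule le_eps_K[of "max C 0 + 2"])
    fix e :: real assume e: "e > 0"
    obtain f g r where fg: "f \<in> B" "g \<in> B" "r < e" "\<And>x. cmod (a x - (of_real (f x) + \<i> * of_real (g x))) \<le> r"
      using algA_approx[OF a e] by blast
    define p where "p = (\<lambda>x. cr f x + \<i> * cr g x)"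
    define q where "q = (\<lambda>x. a x - p x)"
    have qA: "q \<in> algA B" unfolding q_def p_def by (rule algA_sub[OF adm a fg(1,2)])
    have crf: "cr f \<in> algA B" and icg: "(\<lambda>x. \<i> * cr g x) \<in> algA B" and crg: "cr g \<in> algA B"
      using cr_in_algA i_cr_in_algA fg adm by auto
    have pA: "p \<in> algA B"
      unfolding p_def by (rule fg_in_algA[OF fg(1,2)])
    have "\<phi> a = \<phi> (\<lambda>x. q x + p x)" by (simp add: q_def)
    also have "\<dots> = \<phi> q + \<phi> p" by (rule spec_add[OF phi qA pA])
    also have "\<phi> p = \<phi> (cr f) + \<phi> (\<lambda>x. \<i> * cr g x)" unfolding p_def by (rule spec_add[OF phi crf icg])
    also have "\<phi> (\<lambda>x. \<i> * cr g x) = \<i> * \<phi> (cr g)" by (rule spec_scale[OF phi crg])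
    finally have phia: "\<phi> a = \<phi> q + (\<phi> (cr f) + \<i> * \<phi> (cr g))" .
    have nq: "nrm q \<le> r" unfolding nrm_def
      by (rule cSUP_least) (use fg(4) in \<open>auto simp: q_def p_def cr_def\<close>)
    have nq0: "0 \<le> nrm q" using nrm_upper[OF adm qA, of undefined] by (meson norm_ge_zero order_trans)
    have b1: "cmod (\<phi> q) \<le> max C 0 * e"
    proof -
      have "cmod (\<phi> q) \<le> C * nrm q" using C qA unfolding nrm_def by blast
      also have "\<dots> \<le> max C 0 * nrm q" using nq0 by (intro mult_right_mono) auto
      also have "\<dots> \<le> max C 0 * e" using nq fg(3) by (intro mult_left_mono) auto
      finally show ?thesis .
    qed
    have pb: "cmod (p x) \<le> nrm a + e" for x
    proof -
      have "cmod (p x) \<le> cmod (a x) + cmod (p x - a x)"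
        by (metis add.commute diff_add_cancel norm_triangle_ineq)
      also have "cmod (p x - a x) \<le> r" using fg(4)[of x] by (simp add: p_def cr_def norm_minus_commute)
      finally show ?thesis using nrm_upper[OF adm a, of x] fg(3) by simp
    qed
    have bf: "cmod (\<phi> (cr f)) \<le> nrm a + e"
    proof (rule chr_bound[OF phi adm fg(1)])
      fix x have "\<bar>f x\<bar> = \<bar>Re (p x)\<bar>" by (simp add: p_def cr_def)
      also have "\<dots> \<le> cmod (p x)" by (rule abs_Re_le_cmod)
      finally show "\<bar>f x\<bar> \<le> nrm a + e" using pb[of x] by simp
    qed
    have bg: "cmod (\<phi> (cr g)) \<le> nrm a + e"
    proof (rule chr_bound[OF phi adm fg(2)])
      fix x have "\<bar>g x\<bar> = \<bar>Im (p x)\<bar>" by (simp add: p_def cr_def)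
      also have "\<dots> \<le> cmod (p x)" by (rule abs_Im_le_cmod)
      finally show "\<bar>g x\<bar> \<le> nrm a + e" using pb[of x] by simp
    qed
    have "cmod (\<phi> a) \<le> cmod (\<phi> q) + (cmod (\<phi> (cr f)) + cmod (\<i> * \<phi> (cr g)))"
      unfolding phia by (meson norm_triangle_ineq order_trans add_left_mono)
    also have "\<dots> \<le> max C 0 * e + ((nrm a + e) + (nrm a + e))"
      using b1 bf bg by (intro add_mono) (auto simp: norm_mult)
    finally show "cmod (\<phi> a) \<le> 2 * nrm a + (max C 0 + 2) * e" by (simp add: algebra_simps)
  qed simp
qed




abbreviation PT :: "(('a \<Rightarrow> complex) \<Rightarrow> complex) topology" where
  "PT \<equiv> product_topology (\<lambda>_. euclidean) UNIV"

lemma proj_cont: "continuous_map PT euclidean (\<lambda>\<phi>. \<phi> a)"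
  using continuous_map_product_projection[of a UNIV "\<lambda>_. euclidean"] by simp

lemma cm_cmult: fixes F G :: "_ \<Rightarrow> complex"
  shows "continuous_map X euclidean F \<Longrightarrow> continuous_map X euclidean G \<Longrightarrow> continuous_map X euclidean (\<lambda>x. F x * G x)"
  by (simp add: continuous_map_atin tendsto_mult)

lemma cm_Re: fixes F :: "_ \<Rightarrow> complex"
  shows "continuous_map X euclidean F \<Longrightarrow> continuous_map X euclidean (\<lambda>x. Re (F x))"
  by (simp add: continuous_map_atin tendsto_Re)

lemma cl_all: "(\<And>i. closedin PT {\<phi>. P i \<phi>}) \<Longrightarrow> closedin PT {\<phi>. \<forall>i. P i \<phi>}"
proof -
  assume h: "\<And>i. closedin PT {\<phi>. P i \<phi>}"
  have "{\<phi>. \<forall>i. P i \<phi>} = \<Inter> (range (\<lambda>i. {\<phi>. P i \<phi>}))" by auto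
  moreover have "closedin PT (\<Inter> (range (\<lambda>i. {\<phi>. P i \<phi>})))"
    by (rule closedin_Inter) (use h in auto)
  ultimately show ?thesis by simp
qed

lemma cl_imp: "(Q \<Longrightarrow> closedin PT {\<phi>. P \<phi>}) \<Longrightarrow> closedin PT {\<phi>. Q \<longrightarrow> P \<phi>}"
  by (cases Q) (auto simp: closedin_topspace[of PT, simplified])

lemma cl_ball: "(\<And>i. i \<in> A \<Longrightarrow> closedin PT {\<phi>. P i \<phi>}) \<Longrightarrow> closedin PT {\<phi>. \<forall>i\<in>A. P i \<phi>}"
proof -
  assume h: "\<And>i. i \<in> A \<Longrightarrow> closedin PT {\<phi>. P i \<phi>}"
  have "closedin PT {\<phi>. \<forall>i. i \<in> A \<longrightarrow> P i \<phi>}" by (rule cl_all, rule cl_imp, rule h)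
  thus ?thesis by (simp add: Ball_def)
qed

lemma cl_eq: fixes F G :: "_ \<Rightarrow> 'b::real_normed_vector"
  assumes "continuous_map PT euclidean F" "continuous_map PT euclidean G"
  shows "closedin PT {\<phi>. F \<phi> = G \<phi>}"
proof -
  have "closedin PT {\<phi> \<in> topspace PT. F \<phi> - G \<phi> \<in> {0}}"
    by (rule closedin_continuous_map_preimage) (use assms in \<open>auto intro: continuous_map_diff\<close>)
  thus ?thesis by simp
qed

lemma cl_le: fixes F G :: "_ \<Rightarrow> real"
  assumes "continuous_map PT euclidean F" "continuous_map PT euclidean G"
  shows "closedin PT {\<phi>. F \<phi> \<le> G \<phi>}"
proof -
  have "closedin PT {\<phi> \<in> topspace PT. G \<phi> - F \<phi> \<in> {0..}}"
    by (rule closedin_continuous_map_preimage) (use assms in \<open>auto intro: continuous_map_diff\<close>)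
  thus ?thesis by simp
qed

definition KK :: "('a \<Rightarrow> real) set \<Rightarrow> ('a \<Rightarrow> real) \<Rightarrow> real \<Rightarrow> (('a \<Rightarrow> complex) \<Rightarrow> complex) set" where
  "KK B h c = {\<phi>. (\<forall>a. a \<notin> algA B \<longrightarrow> \<phi> a = 0) \<and>
     (\<forall>a\<in>algA B. \<forall>b\<in>algA B. \<phi> (\<lambda>x. a x + b x) = \<phi> a + \<phi> b) \<and>
     (\<forall>a\<in>algA B. \<forall>c::complex. \<phi> (\<lambda>x. c * a x) = c * \<phi> a) \<and>
     (\<forall>a\<in>algA B. \<forall>b\<in>algA B. \<phi> (\<lambda>x. a x * b x) = \<phi> a * \<phi> b) \<and>
     (\<forall>a\<in>algA B. cmod (\<phi> a) \<le> 2 * nrm a) \<and> c \<le> Re (\<phi> (cr h))}"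

lemma KK_closed: "closedin PT (KK B h c)"
proof -
  have pc: "continuous_map PT euclidean (\<lambda>\<phi>. \<phi> a)" for a :: "'a \<Rightarrow> complex" by (rule proj_cont)
  have c1: "closedin PT {\<phi>. \<forall>a. a \<notin> algA B \<longrightarrow> \<phi> a = 0}"
    by (intro cl_all cl_imp cl_eq pc continuous_map_const[THEN iffD2]) simp
  have c2: "closedin PT {\<phi>. \<forall>a\<in>algA B. \<forall>b\<in>algA B. \<phi> (\<lambda>x. a x + b x) = \<phi> a + \<phi> b}"
    by (intro cl_ball cl_eq pc continuous_map_add)
  have c3: "closedin PT {\<phi>. \<forall>a\<in>algA B. \<forall>c::complex. \<phi> (\<lambda>x. c * a x) = c * \<phi> a}"
    by (intro cl_ball cl_all cl_eq pc cm_cmult continuous_map_const[THEN iffD2]) simp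
  have c4: "closedin PT {\<phi>. \<forall>a\<in>algA B. \<forall>b\<in>algA B. \<phi> (\<lambda>x. a x * b x) = \<phi> a * \<phi> b}"
    by (intro cl_ball cl_eq pc cm_cmult)
  have c5: "closedin PT {\<phi>. \<forall>a\<in>algA B. cmod (\<phi> a) \<le> 2 * nrm a}"
    by (intro cl_ball cl_le pc continuous_map_norm continuous_map_const[THEN iffD2]) simp
  have c6: "closedin PT {\<phi>. c \<le> Re (\<phi> (cr h))}"
    by (intro cl_le pc cm_Re continuous_map_const[THEN iffD2]) simp
  have "KK B h c = {\<phi>. \<forall>a. a \<notin> algA B \<longrightarrow> \<phi> a = 0} \<inter> {\<phi>. \<forall>a\<in>algA B. \<forall>b\<in>algA B. \<phi> (\<lambda>x. a x + b x) = \<phi> a + \<phi> b}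
     \<inter> {\<phi>. \<forall>a\<in>algA B. \<forall>c::complex. \<phi> (\<lambda>x. c * a x) = c * \<phi> a} \<inter> {\<phi>. \<forall>a\<in>algA B. \<forall>b\<in>algA B. \<phi> (\<lambda>x. a x * b x) = \<phi> a * \<phi> b}
     \<inter> {\<phi>. \<forall>a\<in>algA B. cmod (\<phi> a) \<le> 2 * nrm a} \<inter> {\<phi>. c \<le> Re (\<phi> (cr h))}"
    unfolding KK_def by blast
  thus ?thesis using c1 c2 c3 c4 c5 c6 by (simp add: closedin_Int)
qed

lemma KK_compact: "compactin PT (KK B h c)"
proof -
  define S where "S a = (if a \<in> algA B then cball 0 (2 * nrm a) else {0 :: complex})" for a
  have "compactin PT (PiE UNIV S)"
    by (subst compactin_PiE) (auto simp: S_def)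
  moreover have "KK B h c \<subseteq> PiE UNIV S"
    unfolding KK_def S_def by (auto simp: PiE_def)
  ultimately show ?thesis using closed_compactin KK_closed by blast
qed

lemma KK_sub: "admissible_space B \<Longrightarrow> h \<in> B \<Longrightarrow> c > 0 \<Longrightarrow> KK B h c \<subseteq> spectrum_chars B"
proof
  fix \<phi> assume adm: "admissible_space B" and hB: "h \<in> B" and c: "c > 0" and k: "\<phi> \<in> KK B h c"
  have "\<phi> (cr h) \<noteq> 0" using k c unfolding KK_def by auto
  moreover have "cr h \<in> algA B" using cr_in_algA hB adm by blast
  ultimately show "\<phi> \<in> spectrum_chars B" using k unfolding KK_def spectrum_chars_def nrm_def by blast
qed

lemma KK_sup: "admissible_space B \<Longrightarrow> \<phi> \<in> spectrum_chars B \<Longrightarrow> c \<le> Re (\<phi> (cr h)) \<Longrightarrow> \<phi> \<in> KK B h c"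
  unfolding KK_def using chr_uniform[of \<phi> B] unfolding spectrum_chars_def by blast

lemma compact_support:
  assumes adm: "admissible_space B" and hB: "h \<in> B" and c: "c > 0"
    and supp: "\<And>\<phi>. \<phi> \<in> spectrum_chars B \<Longrightarrow> \<phi> g \<noteq> 0 \<Longrightarrow> c \<le> Re (\<phi> (cr h))"
  shows "compactin (gelfand_top B) (gelfand_top B closure_of {\<phi>\<in>spectrum_chars B. gelfand g \<phi> \<noteq> 0})"
proof -
  have Ks: "KK B h c \<subseteq> spectrum_chars B" by (rule KK_sub[OF adm hB c])
  have Kc: "compactin (gelfand_top B) (KK B h c)"
    unfolding gelfand_top_def compactin_subtopology using KK_compact Ks by blast
  have Kcl: "closedin (gelfand_top B) (KK B h c)"
    unfolding gelfand_top_def closedin_subtopology using KK_closed Ks by blast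
  have "{\<phi>\<in>spectrum_chars B. gelfand g \<phi> \<noteq> 0} \<subseteq> KK B h c"
    using supp KK_sup[OF adm] unfolding gelfand_def by blast
  hence "gelfand_top B closure_of {\<phi>\<in>spectrum_chars B. gelfand g \<phi> \<noteq> 0} \<subseteq> KK B h c"
    using closure_of_minimal Kcl by blast
  thus ?thesis using closed_compactin[OF Kc] closedin_closure_of by blast
qed




lemma T_inc: "incseq (\<lambda>n. ennreal (max (t - 1 / real (Suc n)) 0))"
proof (rule incseq_SucI)
  fix n
  have "1 / real (Suc (Suc n)) \<le> 1 / real (Suc n)" by (simp add: frac_le)
  thus "ennreal (max (t - 1 / real (Suc n)) 0) \<le> ennreal (max (t - 1 / real (Suc (Suc n))) 0)"
    by (intro ennreal_leI) simp
qed

lemma T_sup: assumes "t \<ge> 0" shows "(SUP n. ennreal (max (t - 1 / real (Suc n)) 0)) = ennreal t"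
proof -
  have l: "(\<lambda>n. 1 / real (Suc n)) \<longlonglongrightarrow> 0"
    using LIMSEQ_inverse_real_of_nat by (simp add: inverse_eq_divide)
  have "(\<lambda>n. max (t - 1 / real (Suc n)) 0) \<longlonglongrightarrow> max (t - 0) 0"
    by (intro tendsto_max tendsto_diff tendsto_const l)
  hence "(\<lambda>n. ennreal (max (t - 1 / real (Suc n)) 0)) \<longlonglongrightarrow> ennreal t"
    using assms by (intro tendsto_ennrealI) simp
  thus ?thesis using LIMSEQ_SUP[OF T_inc] LIMSEQ_unique by blast
qed

lemma meas_proj:
  assumes hat: "is_hat_measure B M N"
  shows "(\<lambda>\<phi>. \<phi> a) \<in> borel_measurable N"
proof (rule borel_measurableI)
  fix S :: "complex set" assume S: "open S"
  have rad: "space N = topspace (gelfand_top B)" "sets N = borel_sets_of (gelfand_top B)"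
    using hat unfolding is_hat_measure_def radon_measure_def by auto
  have cm: "continuous_map (gelfand_top B) euclidean (\<lambda>\<phi>. \<phi> a)"
    unfolding gelfand_top_def by (rule continuous_map_from_subtopology[OF proj_cont])
  have "openin (gelfand_top B) {\<phi> \<in> topspace (gelfand_top B). \<phi> a \<in> S}"
    by (rule openin_continuous_map_preimage[OF cm]) (use S in simp)
  moreover have "(\<lambda>\<phi>. \<phi> a) -` S \<inter> space N = {\<phi> \<in> topspace (gelfand_top B). \<phi> a \<in> S}"
    using rad by auto
  ultimately show "(\<lambda>\<phi>. \<phi> a) -` S \<inter> space N \<in> sets N"
    unfolding rad borel_sets_of_def by (auto intro: sigma_sets.Basic)
qed

theorem mainTheorem9:
  fixes B :: "('a \<Rightarrow> real) set" and M :: "'a measure"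
    and N :: "(('a \<Rightarrow> complex) \<Rightarrow> complex) measure"
  assumes "admissible_space B"
    and "M \<in> DB B"
    and "is_hat_measure B M N"
    and "f \<in> B"
  shows "(\<integral>\<^sup>+ x. ennreal ((f x)\<^sup>2) \<partial>M)
         = (\<integral>\<^sup>+ \<phi>. ennreal ((cmod (gelfand (\<lambda>x. complex_of_real (f x)) \<phi>))\<^sup>2) \<partial>N)"
proof -
  note adm = assms(1) and MD = assms(2) and hat = assms(3) and fB = assms(4)
  define h where "h = (\<lambda>x. (f x)\<^sup>2)"
  define c where "c n = 1 / real (Suc n)" for n
  define r where "r n = (\<lambda>x. h x - min (h x) (c n))" for n
  have cpos: "c n > 0" for n by (simp add: c_def)
  have hB: "h \<in> B" unfolding h_def by (rule sq_in_B[OF adm fB])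
  have hpos: "h x \<ge> 0" for x by (simp add: h_def)
  have rB: "r n \<in> B" for n unfolding r_def using adm_diff[OF adm hB adm_minc[OF adm hB cpos]] .
  have rmax: "r n x = max (h x - c n) 0" for n x by (simp add: r_def min_def max_def)
  have rnn: "r n x \<ge> 0" for n x by (simp add: rmax)
  have integ: "integrable M (r n)" for n using MD rB unfolding DB_def by blast
  have sN: "space N = spectrum_chars B"
    using hat unfolding is_hat_measure_def radon_measure_def gelfand_top_def by auto
  have gel: "\<phi> (cr (r n)) = of_real (max ((cmod (\<phi> (cr f)))\<^sup>2 - c n) 0)"
    if phi: "\<phi> \<in> spectrum_chars B" for \<phi> n
    unfolding r_def by (rule chr_lattice[OF phi adm hB hpos _ cpos]) (unfold h_def, rule chr_sq[OF phi adm fB])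
  have hatn: "(\<integral>\<^sup>+ \<phi>. ennreal (Re (gelfand (cr (r n)) \<phi>)) \<partial>N) = ennreal (\<integral> x. r n x \<partial>M)" for n
  proof -
    have g: "cr (r n) \<in> algA B" by (rule cr_in_algA[OF rB adm])
    have real: "\<forall>\<phi>\<in>spectrum_chars B. gelfand (cr (r n)) \<phi> \<in> \<real> \<and> Re (gelfand (cr (r n)) \<phi>) \<ge> 0"
    proof
      fix \<phi> assume p: "\<phi> \<in> spectrum_chars B"
      show "gelfand (cr (r n)) \<phi> \<in> \<real> \<and> Re (gelfand (cr (r n)) \<phi>) \<ge> 0"
        unfolding gelfand_def gel[OF p, of n] by simp
    qed
    have cpt: "compactin (gelfand_top B) (gelfand_top B closure_of {\<phi>\<in>spectrum_chars B. gelfand (cr (r n)) \<phi> \<noteq> 0})"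
    proof (rule compact_support[OF adm hB cpos])
      fix \<phi> assume phi: "\<phi> \<in> spectrum_chars B" and ne: "\<phi> (cr (r n)) \<noteq> 0"
      have "(cmod (\<phi> (cr f)))\<^sup>2 > c n" using ne gel[OF phi] by (auto simp: max_def split: if_splits)
      moreover have "\<phi> (cr h) = of_real ((cmod (\<phi> (cr f)))\<^sup>2)" unfolding h_def by (rule chr_sq[OF phi adm fB])
      ultimately show "c n \<le> Re (\<phi> (cr h))" by simp
    qed
    have "(\<integral>\<^sup>+ \<phi>. ennreal (Re (gelfand (cr (r n)) \<phi>)) \<partial>N) = (SUP m::nat. ennreal (\<integral> x. r n x \<partial>M))"
      using hat g real cpt unfolding is_hat_measure_def
      apply (elim conjE)
      apply (drule bspec[OF _ g])
      apply (drule mp, use real in blast)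
      apply (drule mp, use cpt in blast)
      apply (drule spec[of _ "\<lambda>_. r n"])
      using rB rnn by (auto simp: cr_def)
    thus ?thesis by simp
  qed
  have lhs_n: "ennreal (\<integral> x. r n x \<partial>M) = (\<integral>\<^sup>+ x. ennreal (r n x) \<partial>M)" for n
    by (rule nn_integral_eq_integral[symmetric, OF integ]) (simp add: rmax)
  have rhs_n: "(\<integral>\<^sup>+ \<phi>. ennreal (Re (gelfand (cr (r n)) \<phi>)) \<partial>N)
      = (\<integral>\<^sup>+ \<phi>. ennreal (max ((cmod (\<phi> (cr f)))\<^sup>2 - c n) 0) \<partial>N)" for n
    by (rule nn_integral_cong) (simp add: gelfand_def gel sN)
  have meas_r: "(\<lambda>x. ennreal (r n x)) \<in> borel_measurable M" for n
    using integ by (intro measurable_compose[OF borel_measurable_integrable[OF integ]]) auto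
  have [measurable]: "(\<lambda>\<phi>. \<phi> (cr f)) \<in> borel_measurable N" by (rule meas_proj[OF hat])
  have L: "(\<integral>\<^sup>+ x. ennreal ((f x)\<^sup>2) \<partial>M) = (SUP n. \<integral>\<^sup>+ x. ennreal (r n x) \<partial>M)"
  proof -
    have "(\<integral>\<^sup>+ x. ennreal ((f x)\<^sup>2) \<partial>M) = (\<integral>\<^sup>+ x. (SUP n. ennreal (r n x)) \<partial>M)"
      by (rule nn_integral_cong) (use T_sup[of "(f _)\<^sup>2"] in \<open>simp add: rmax c_def h_def\<close>)
    also have "\<dots> = (SUP n. \<integral>\<^sup>+ x. ennreal (r n x) \<partial>M)"
    proof (rule nn_integral_monotone_convergence_SUP[OF _ meas_r])
      show "incseq (\<lambda>n x. ennreal (r n x))"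
        using T_inc unfolding incseq_def le_fun_def rmax c_def by blast
    qed
    finally show ?thesis .
  qed
  have R: "(\<integral>\<^sup>+ \<phi>. ennreal ((cmod (gelfand (\<lambda>x. complex_of_real (f x)) \<phi>))\<^sup>2) \<partial>N)
      = (SUP n. \<integral>\<^sup>+ \<phi>. ennreal (max ((cmod (\<phi> (cr f)))\<^sup>2 - c n) 0) \<partial>N)"
  proof -
    have "(\<integral>\<^sup>+ \<phi>. ennreal ((cmod (gelfand (\<lambda>x. complex_of_real (f x)) \<phi>))\<^sup>2) \<partial>N)
        = (\<integral>\<^sup>+ \<phi>. (SUP n. ennreal (max ((cmod (\<phi> (cr f)))\<^sup>2 - c n) 0)) \<partial>N)"
      by (rule nn_integral_cong) (use T_sup[of "(cmod _)\<^sup>2"] in \<open>simp add: c_def gelfand_def cr_def\<close>)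
    also have "\<dots> = (SUP n. \<integral>\<^sup>+ \<phi>. ennreal (max ((cmod (\<phi> (cr f)))\<^sup>2 - c n) 0) \<partial>N)"
    proof (rule nn_integral_monotone_convergence_SUP)
      show "incseq (\<lambda>n \<phi>. ennreal (max ((cmod (\<phi> (cr f)))\<^sup>2 - c n) 0))"
        using T_inc unfolding incseq_def le_fun_def c_def by blast
      fix n show "(\<lambda>\<phi>. ennreal (max ((cmod (\<phi> (cr f)))\<^sup>2 - c n) 0)) \<in> borel_measurable N"
        by measurable
    qed
    finally show ?thesis .
  qed
  show ?thesis unfolding L R using hatn lhs_n rhs_n by simp
qed


end
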